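(* The $7$-dimensional nilpotent Lie algebra $(0,0,0,0,12,34,36)$ admits no calibrated $\mathrm{G}_2$-structure; more precisely, for every closed $\phi\in\Lambda^3\mathfrak g^*$ the $2$-form $e_7\lrcorner\,\phi$ lies in the span of $e^{13},e^{23},e^{34},e^{12},e^{36},e^{46}$ and satisfies $(e_7\lrcorner\,\phi)^3=0$.
   Context: Notation: $(a_1,\dots,a_n)$ denotes the Lie algebra having a basis $e^1,\dots,e^n$ of its dual with $de^i=a_i$, where e.g. "$12$" stands for $e^{12}=e^1\wedge e^2$; $e_1,\dots,e_n$ is the dual basis of $\mathfrak g$. A $3$-form on a $7$-dimensional Lie algebra defines a $\mathrm{G}_2$-structure if in some basis $f^1,\dots,f^7$ of $\mathfrak g^*$ it equals $f^{127}+f^{347}+f^{567}+f^{135}-f^{236}-f^{146}-f^{245}$; it is calibrated if it is closed under the Chevalley–Eilenberg differential $d$. *)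

theory Defs
  imports "HOL-Combinatorics.Permutations" Complex_Main
begin

text \<open>The Lie algebra g has basis e_1..e_7 (indices 1..7 as nat).
A k-form on g is represented by its values on basis vectors,
alpha(e_a1,...,e_ak), as a function of the indices; the form is alternating.
Convention for the Chevalley-Eilenberg differential: d alpha(x,y) = - alpha([x,y])
on 1-forms, and for 3-forms the standard formula
d phi(x0,x1,x2,x3) = sum_{i<j} (-1)^(i+j) phi([xi,xj], ...).\<close>

definition idx :: "nat set" where "idx = {1..7}"

text \<open>value of the elementary 2-form e^{pq} on (e_i,e_j)\<close>
definition e2 :: "nat \<Rightarrow> nat \<Rightarrow> nat \<Rightarrow> nat \<Rightarrow> real" where
  "e2 p q i j = (if p = i \<and> q = j then 1 else 0) - (if p = j \<and> q = i then 1 else 0)"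

text \<open>The Lie algebra (0,0,0,0,12,34,36): dE k i j = (de^k)(e_i,e_j).\<close>
definition dE :: "nat \<Rightarrow> nat \<Rightarrow> nat \<Rightarrow> real" where
  "dE k i j = (if k = 5 then e2 1 2 i j else if k = 6 then e2 3 4 i j
              else if k = 7 then e2 3 6 i j else 0)"

text \<open>k-th component of the bracket [e_a,e_b] = - sum_k de^k(e_a,e_b) e_k\<close>
definition br :: "nat \<Rightarrow> nat \<Rightarrow> nat \<Rightarrow> real" where
  "br k a b = - dE k a b"

definition alt3 :: "(nat \<Rightarrow> nat \<Rightarrow> nat \<Rightarrow> real) \<Rightarrow> bool" where
  "alt3 phi \<longleftrightarrow> (\<forall>a\<in>idx. \<forall>b\<in>idx. \<forall>c\<in>idx.
      phi a b c = - phi b a c \<and> phi a b c = - phi a c b)"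

text \<open>phi([e_a,e_b], e_c, e_d)\<close>
definition brapp :: "(nat \<Rightarrow> nat \<Rightarrow> nat \<Rightarrow> real) \<Rightarrow> nat \<Rightarrow> nat \<Rightarrow> nat \<Rightarrow> nat \<Rightarrow> real" where
  "brapp phi a b c d = (\<Sum>k\<in>idx. br k a b * phi k c d)"

definition d3 :: "(nat \<Rightarrow> nat \<Rightarrow> nat \<Rightarrow> real) \<Rightarrow> nat \<Rightarrow> nat \<Rightarrow> nat \<Rightarrow> nat \<Rightarrow> real" where
  "d3 phi x0 x1 x2 x3 =
     - brapp phi x0 x1 x2 x3 + brapp phi x0 x2 x1 x3 - brapp phi x0 x3 x1 x2
     - brapp phi x1 x2 x0 x3 + brapp phi x1 x3 x0 x2 - brapp phi x2 x3 x0 x1"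

definition closed3 :: "(nat \<Rightarrow> nat \<Rightarrow> nat \<Rightarrow> real) \<Rightarrow> bool" where
  "closed3 phi \<longleftrightarrow> (\<forall>a\<in>idx. \<forall>b\<in>idx. \<forall>c\<in>idx. \<forall>d\<in>idx. d3 phi a b c d = 0)"

definition det3 :: "real \<Rightarrow> real \<Rightarrow> real \<Rightarrow> real \<Rightarrow> real \<Rightarrow> real \<Rightarrow> real \<Rightarrow> real \<Rightarrow> real \<Rightarrow> real" where
  "det3 a11 a12 a13 a21 a22 a23 a31 a32 a33 =
     a11 * (a22 * a33 - a23 * a32) - a12 * (a21 * a33 - a23 * a31) + a13 * (a21 * a32 - a22 * a31)"

text \<open>Given f^i = sum_a P i a e^a, the value f^{ijk}(e_a,e_b,e_c).\<close>
definition f3 :: "(nat \<Rightarrow> nat \<Rightarrow> real) \<Rightarrow> nat \<Rightarrow> nat \<Rightarrow> nat \<Rightarrow> nat \<Rightarrow> nat \<Rightarrow> nat \<Rightarrow> real" where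
  "f3 P i j k a b c = det3 (P i a) (P i b) (P i c) (P j a) (P j b) (P j c) (P k a) (P k b) (P k c)"

definition g2form :: "(nat \<Rightarrow> nat \<Rightarrow> real) \<Rightarrow> nat \<Rightarrow> nat \<Rightarrow> nat \<Rightarrow> real" where
  "g2form P a b c = f3 P 1 2 7 a b c + f3 P 3 4 7 a b c + f3 P 5 6 7 a b c + f3 P 1 3 5 a b c
      - f3 P 2 3 6 a b c - f3 P 1 4 6 a b c - f3 P 2 4 5 a b c"

text \<open>phi is a G2-structure: phi equals the standard form in some basis f^1..f^7 of g*,
 f^i = sum_a P i a e^a with P invertible.\<close>
definition is_G2 :: "(nat \<Rightarrow> nat \<Rightarrow> nat \<Rightarrow> real) \<Rightarrow> bool" where
  "is_G2 phi \<longleftrightarrow> (\<exists>P Q :: nat \<Rightarrow> nat \<Rightarrow> real.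
      (\<forall>i\<in>idx. \<forall>k\<in>idx. (\<Sum>j\<in>idx. P i j * Q j k) = (if i = k then 1 else 0)) \<and>
      (\<forall>i\<in>idx. \<forall>k\<in>idx. (\<Sum>j\<in>idx. Q i j * P j k) = (if i = k then 1 else 0)) \<and>
      (\<forall>a\<in>idx. \<forall>b\<in>idx. \<forall>c\<in>idx. phi a b c = g2form P a b c))"

definition contr7 :: "(nat \<Rightarrow> nat \<Rightarrow> nat \<Rightarrow> real) \<Rightarrow> nat \<Rightarrow> nat \<Rightarrow> real" where
  "contr7 phi i j = phi 7 i j"

text \<open>omega \<wedge> omega \<wedge> omega evaluated on (e_{x 0},...,e_{x 5}), with the standard
 normalisation (alpha\<wedge>beta)(v) = 1/(k! l!) sum_sigma sgn(sigma) ...\<close>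
definition cube2 :: "(nat \<Rightarrow> nat \<Rightarrow> real) \<Rightarrow> (nat \<Rightarrow> nat) \<Rightarrow> real" where
  "cube2 w x = (1/8) * (\<Sum>s | s permutes {0..<6}.
      of_int (sign s) * w (x (s 0)) (x (s 1)) * w (x (s 2)) (x (s 3)) * w (x (s 4)) (x (s 5)))"

definition allowed_pairs :: "(nat \<times> nat) set" where
  "allowed_pairs = {(1,3),(2,3),(3,4),(1,2),(3,6),(4,6)}"

end

theory Submission
  imports Defs
begin

lemma idx_eq: "idx = {1,2,3,4,5,6,7}" by (auto simp: idx_def)

lemma altA: "alt3 phi \<Longrightarrow> a \<in> idx \<Longrightarrow> b \<in> idx \<Longrightarrow> c \<in> idx \<Longrightarrow> phi a b c = - phi b a c"
  unfolding alt3_def by blast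
lemma altB: "alt3 phi \<Longrightarrow> a \<in> idx \<Longrightarrow> b \<in> idx \<Longrightarrow> c \<in> idx \<Longrightarrow> phi a b c = - phi a c b"
  unfolding alt3_def by blast

lemma cl: "closed3 phi \<Longrightarrow> a \<in> idx \<Longrightarrow> b \<in> idx \<Longrightarrow> c \<in> idx \<Longrightarrow> d \<in> idx \<Longrightarrow> d3 phi a b c d = 0"
  by (simp add: closed3_def)

lemmas dsimps = d3_def brapp_def br_def dE_def e2_def idx_eq

lemma zz: assumes A: "alt3 phi" and "a \<in> idx" "b \<in> idx" shows "phi a b a = 0" "phi a a b = 0" "phi b a a = 0"
proof -
  have "phi a a b = - phi a a b" using altA[OF A, of a a b] assms by simp
  then show "phi a a b = 0" by simp
  then show "phi a b a = 0" using altB[OF A, of a b a] assms by simp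
  then show "phi b a a = 0" using altA[OF A, of b a a] assms \<open>phi a a b = 0\<close> by simp
qed

lemma vanish:
  assumes A: "alt3 phi" and C: "closed3 phi"
  shows "phi 7 1 4 = 0" "phi 7 1 5 = 0" "phi 7 1 6 = 0" "phi 7 2 4 = 0" "phi 7 2 5 = 0"
    "phi 7 2 6 = 0" "phi 7 3 5 = 0" "phi 7 4 5 = 0" "phi 7 5 6 = 0"
proof -
  have i: "(1::nat) \<in> idx" "(2::nat) \<in> idx" "(3::nat) \<in> idx" "(4::nat) \<in> idx"
     "(5::nat) \<in> idx" "(6::nat) \<in> idx" "(7::nat) \<in> idx" by (auto simp: idx_def)
  note sw = altA[OF A] altB[OF A]
  have e0: "d3 phi 1 3 4 6 = 0" using cl[OF C] by (simp add: idx_def)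
  note e0' = e0[unfolded dsimps, simplified, folded One_nat_def]
  show "phi 7 1 4 = 0" using e0' zz(1)[OF A i(6) i(1)] by linarith
  have e1: "d3 phi 1 3 5 6 = 0" using cl[OF C] by (simp add: idx_def)
  note e1' = e1[unfolded dsimps, simplified, folded One_nat_def]
  show "phi 7 1 5 = 0" using e1'  by linarith
  have e2: "d3 phi 1 3 4 7 = 0" using cl[OF C] by (simp add: idx_def)
  note e2' = e2[unfolded dsimps, simplified, folded One_nat_def]
  show "phi 7 1 6 = 0" using e2' sw[of 6 1 7] sw[of 6 7 1] sw[of 7 6 1] i by linarith
  have e3: "d3 phi 2 3 4 6 = 0" using cl[OF C] by (simp add: idx_def)
  note e3' = e3[unfolded dsimps, simplified, folded One_nat_def]
  show "phi 7 2 4 = 0" using e3' zz(1)[OF A i(6) i(2)] by linarith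
  have e4: "d3 phi 2 3 5 6 = 0" using cl[OF C] by (simp add: idx_def)
  note e4' = e4[unfolded dsimps, simplified, folded One_nat_def]
  show "phi 7 2 5 = 0" using e4'  by linarith
  have e5: "d3 phi 2 3 4 7 = 0" using cl[OF C] by (simp add: idx_def)
  note e5' = e5[unfolded dsimps, simplified, folded One_nat_def]
  show "phi 7 2 6 = 0" using e5' sw[of 6 2 7] sw[of 6 7 2] sw[of 7 6 2] i by linarith
  have e6: "d3 phi 1 2 3 7 = 0" using cl[OF C] by (simp add: idx_def)
  note e6' = e6[unfolded dsimps, simplified, folded One_nat_def]
  show "phi 7 3 5 = 0" using e6' sw[of 5 3 7] sw[of 5 7 3] sw[of 7 5 3] sw[of 7 3 5] i by linarith
  have e7: "d3 phi 1 2 4 7 = 0" using cl[OF C] by (simp add: idx_def)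
  note e7' = e7[unfolded dsimps, simplified, folded One_nat_def]
  show "phi 7 4 5 = 0" using e7' sw[of 5 4 7] sw[of 5 7 4] sw[of 7 5 4] sw[of 7 4 5] i by linarith
  have e8: "d3 phi 1 2 6 7 = 0" using cl[OF C] by (simp add: idx_def)
  note e8' = e8[unfolded dsimps, simplified, folded One_nat_def]
  show "phi 7 5 6 = 0" using e8' sw[of 5 6 7] sw[of 5 7 6] sw[of 7 5 6] i by linarith
qed


lemma allv:
  assumes A: "alt3 phi" and C: "closed3 phi"
  shows "\<forall>i\<in>idx. \<forall>j\<in>idx. i < j \<and> (i, j) \<notin> allowed_pairs \<longrightarrow> contr7 phi i j = 0"
  using vanish[OF A C] zz[OF A]
  by (auto simp: idx_eq allowed_pairs_def contr7_def)

lemma W: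
  assumes A: "alt3 phi" and C: "closed3 phi"
  shows "\<forall>a\<in>idx. \<forall>b\<in>idx. (a=5 \<or> a=7 \<or> b=5 \<or> b=7) \<longrightarrow> contr7 phi a b = 0"
proof (intro ballI impI)
  fix a b assume ab: "a \<in> idx" "b \<in> idx" "a=5 \<or> a=7 \<or> b=5 \<or> b=7"
  have s: "contr7 phi a b = - contr7 phi b a" using altB[OF A, of 7 a b] ab by (simp add: contr7_def idx_def)
  have na: "(a, b) \<notin> allowed_pairs" "(b, a) \<notin> allowed_pairs" using ab by (auto simp: allowed_pairs_def)
  consider "a < b" | "b < a" | "a = b" by arith
  then show "contr7 phi a b = 0"
  proof cases
    case 1 then show ?thesis using allv[OF A C] ab na by blast
  next
    case 2 then have "contr7 phi b a = 0" using allv[OF A C] ab na by blast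
    then show ?thesis using s by simp
  next
    case 3 then show ?thesis using s by simp
  qed
qed


lemma cube_noninj:
  assumes ij: "i < 6" "j < 6" "i \<noteq> j" "x i = x j"
  shows "cube2 w x = 0"
proof -
  let ?S = "{s. s permutes {0..<(6::nat)}}"
  define g where "g s = of_int (sign s) * w (x (s 0)) (x (s 1)) * w (x (s 2)) (x (s 3)) * w (x (s 4)) (x (s 5))" for s :: "nat \<Rightarrow> nat"
  let ?t = "transpose i j"
  have tp: "?t permutes {0..<6}" using ij by (intro permutes_swap_id) auto
  have xt: "x (?t y) = x y" for y using ij by (cases "y = i"; cases "y = j") auto
  have neg: "g (?t \<circ> s) = - g s" if "s \<in> ?S" for s
  proof -
    have ps: "permutation s" using that permutes_imp_permutation[of "{0..<6}" s] by auto
    have pt: "permutation ?t" using tp permutes_imp_permutation[of "{0..<6}" ?t] by auto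
    have "sign (?t \<circ> s) = - sign s" using sign_compose[OF pt ps] sign_swap_id[of i j] ij by simp
    then show ?thesis unfolding g_def by (simp add: xt)
  qed
  have "sum g ?S = sum (\<lambda>s. g (?t \<circ> s)) ?S" by (rule setum_permutations_compose_left[OF tp])
  also have "\<dots> = sum (\<lambda>s. - g s) ?S" by (rule sum.cong) (auto simp: neg)
  also have "\<dots> = - sum g ?S" by (simp add: sum_negf)
  finally have "sum g ?S = 0" by simp
  then show ?thesis unfolding cube2_def g_def by simp
qed

lemma cube_inj:
  assumes xi: "\<forall>m<6. x m \<in> idx" and inj: "inj_on x {0..<6}"
    and Wz: "\<forall>a\<in>idx. \<forall>b\<in>idx. (a=5 \<or> a=7 \<or> b=5 \<or> b=7) \<longrightarrow> w a b = 0"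
  shows "cube2 w x = 0"
proof -
  obtain m where m: "m < 6" "x m = 5 \<or> x m = 7"
  proof (rule ccontr)
    assume "\<not> thesis"
    with that have "\<forall>m<6. x m \<noteq> 5 \<and> x m \<noteq> 7" by blast
    then have "x ` {0..<6} \<subseteq> {1,2,3,4,6}" using xi by (auto simp: idx_eq)
    then have "card (x ` {0..<6}) \<le> card {1,2,3,4,6::nat}" by (intro card_mono) auto
    moreover have "card (x ` {0..<6}) = 6" using card_image[OF inj] by simp
    ultimately show False by simp
  qed
  have "(\<Sum>s | s permutes {0..<6}. of_int (sign s) * w (x (s 0)) (x (s 1)) * w (x (s 2)) (x (s 3)) * w (x (s 4)) (x (s 5))) = (0::real)"
  proof (rule sum.neutral, intro ballI)
    fix s assume "s \<in> {s. s permutes {0..<(6::nat)}}"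
    then have sp: "s permutes {0..<6}" by simp
    have sx: "x (s n) \<in> idx" if "n < 6" for n
      using permutes_in_image[OF sp, of n] that xi by auto
    have "m \<in> s ` {0..<6}" using permutes_image[OF sp] m by auto
    then obtain k where k: "k < 6" "s k = m" by auto
    have xm: "x (s k) = 5 \<or> x (s k) = 7" using k m by simp
    have "k = 0 \<or> k = 1 \<or> k = 2 \<or> k = 3 \<or> k = 4 \<or> k = 5" using k by arith
    then show "of_int (sign s) * w (x (s 0)) (x (s 1)) * w (x (s 2)) (x (s 3)) * w (x (s 4)) (x (s 5)) = 0"
    proof (elim disjE)
      assume "k = 0" then have "x (s 0) = 5 \<or> x (s 0) = 7" using xm by simp
      moreover have "x (s 0) \<in> idx" "x (s 1) \<in> idx" using sx[of 0] sx[of 1] by simp_all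
      ultimately have "w (x (s 0)) (x (s 1)) = 0" using Wz by blast
      then show ?thesis by (simp only: mult_zero_left mult_zero_right)
    next
      assume "k = 1" then have "x (s 1) = 5 \<or> x (s 1) = 7" using xm by simp
      moreover have "x (s 0) \<in> idx" "x (s 1) \<in> idx" using sx[of 0] sx[of 1] by simp_all
      ultimately have "w (x (s 0)) (x (s 1)) = 0" using Wz by blast
      then show ?thesis by (simp only: mult_zero_left mult_zero_right)
    next
      assume "k = 2" then have "x (s 2) = 5 \<or> x (s 2) = 7" using xm by simp
      moreover have "x (s 2) \<in> idx" "x (s 3) \<in> idx" using sx[of 2] sx[of 3] by simp_all
      ultimately have "w (x (s 2)) (x (s 3)) = 0" using Wz by blast
      then show ?thesis by (simp only: mult_zero_left mult_zero_right)
    next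
      assume "k = 3" then have "x (s 3) = 5 \<or> x (s 3) = 7" using xm by simp
      moreover have "x (s 2) \<in> idx" "x (s 3) \<in> idx" using sx[of 2] sx[of 3] by simp_all
      ultimately have "w (x (s 2)) (x (s 3)) = 0" using Wz by blast
      then show ?thesis by (simp only: mult_zero_left mult_zero_right)
    next
      assume "k = 4" then have "x (s 4) = 5 \<or> x (s 4) = 7" using xm by simp
      moreover have "x (s 4) \<in> idx" "x (s 5) \<in> idx" using sx[of 4] sx[of 5] by simp_all
      ultimately have "w (x (s 4)) (x (s 5)) = 0" using Wz by blast
      then show ?thesis by (simp only: mult_zero_left mult_zero_right)
    next
      assume "k = 5" then have "x (s 5) = 5 \<or> x (s 5) = 7" using xm by simp
      moreover have "x (s 4) \<in> idx" "x (s 5) \<in> idx" using sx[of 4] sx[of 5] by simp_all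
      ultimately have "w (x (s 4)) (x (s 5)) = 0" using Wz by blast
      then show ?thesis by (simp only: mult_zero_left mult_zero_right)
    qed
  qed
  then show ?thesis unfolding cube2_def by simp
qed

lemma cube_all:
  assumes xi: "\<forall>m<6. x m \<in> idx"
    and Wz: "\<forall>a\<in>idx. \<forall>b\<in>idx. (a=5 \<or> a=7 \<or> b=5 \<or> b=7) \<longrightarrow> w a b = 0"
  shows "cube2 w x = 0"
proof (cases "inj_on x {0..<6}")
  case True show ?thesis using cube_inj[OF xi True Wz] .
next
  case False
  then obtain i j where "i \<in> {0..<6}" "j \<in> {0..<6}" "x i = x j" "i \<noteq> j" unfolding inj_on_def by blast
  then show ?thesis using cube_noninj[of i j x w] by auto
qed

definition chi :: "(nat \<Rightarrow> real) \<Rightarrow> (nat \<Rightarrow> real) \<Rightarrow> nat \<Rightarrow> real" where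
"chi A B l = (if l=1 then A 2*B 7 - A 7*B 2 + A 3*B 5 - A 5*B 3 - A 4*B 6 + A 6*B 4
 else if l=2 then -A 1*B 7 + A 7*B 1 - A 3*B 6 + A 6*B 3 - A 4*B 5 + A 5*B 4
 else if l=3 then A 4*B 7 - A 7*B 4 - A 1*B 5 + A 5*B 1 + A 2*B 6 - A 6*B 2
 else if l=4 then -A 3*B 7 + A 7*B 3 + A 1*B 6 - A 6*B 1 + A 2*B 5 - A 5*B 2
 else if l=5 then A 6*B 7 - A 7*B 6 + A 1*B 3 - A 3*B 1 - A 2*B 4 + A 4*B 2
 else if l=6 then -A 5*B 7 + A 7*B 5 - A 2*B 3 + A 3*B 2 - A 1*B 4 + A 4*B 1
 else A 1*B 2 - A 2*B 1 + A 3*B 4 - A 4*B 3 + A 5*B 6 - A 6*B 5)"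

lemma expand: "g2form P 7 5 w = (\<Sum>l\<in>idx. chi (\<lambda>i. P i 7) (\<lambda>i. P i 5) l * P l w)"
  by (simp add: g2form_def f3_def det3_def chi_def idx_eq algebra_simps)

lemma lagr: "2 * (\<Sum>l\<in>idx. (chi A B l)^2) = (\<Sum>i\<in>idx. \<Sum>j\<in>idx. (A i * B j - A j * B i)^2)"
  by (simp add: chi_def idx_eq power2_eq_square algebra_simps)

lemma noG2:
  assumes A: "alt3 phi" and C: "closed3 phi" and G: "is_G2 phi"
  shows False
proof -
  obtain P Q :: "nat \<Rightarrow> nat \<Rightarrow> real" where
    PQ: "\<forall>i\<in>idx. \<forall>k\<in>idx. (\<Sum>j\<in>idx. P i j * Q j k) = (if i = k then 1 else 0)" and
    QP: "\<forall>i\<in>idx. \<forall>k\<in>idx. (\<Sum>j\<in>idx. Q i j * P j k) = (if i = k then 1 else 0)" and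
    ph: "\<forall>a\<in>idx. \<forall>b\<in>idx. \<forall>c\<in>idx. phi a b c = g2form P a b c"
    using G unfolding is_G2_def by blast
  define Av where "Av i = P i 7" for i
  define Bv where "Bv i = P i 5" for i
  have i5: "(5::nat) \<in> idx" and i7: "(7::nat) \<in> idx" by (auto simp: idx_def)
  have z5: "g2form P 7 5 w = 0" if "w \<in> idx" for w
  proof -
    have "contr7 phi 5 w = 0" using W[OF A C] that i5 by blast
    then show ?thesis using ph i5 i7 that unfolding contr7_def by metis
  qed
  have chi0: "chi Av Bv l = 0" if l: "l \<in> idx" for l
  proof -
    have "chi Av Bv l = (\<Sum>k\<in>idx. if k = l then chi Av Bv k else 0)"
      using l by (simp add: sum.delta' idx_def)
    also have "\<dots> = (\<Sum>k\<in>idx. chi Av Bv k * (\<Sum>w\<in>idx. P k w * Q w l))"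
      by (rule sum.cong) (use PQ l in auto)
    also have "\<dots> = (\<Sum>k\<in>idx. \<Sum>w\<in>idx. chi Av Bv k * P k w * Q w l)"
      by (simp add: sum_distrib_left mult.assoc)
    also have "\<dots> = (\<Sum>w\<in>idx. \<Sum>k\<in>idx. chi Av Bv k * P k w * Q w l)"
      by (rule sum.swap)
    also have "\<dots> = (\<Sum>w\<in>idx. (\<Sum>k\<in>idx. chi Av Bv k * P k w) * Q w l)"
      by (simp add: sum_distrib_right)
    also have "\<dots> = (\<Sum>w\<in>idx. g2form P 7 5 w * Q w l)"
      unfolding expand Av_def Bv_def by simp
    also have "\<dots> = 0" using z5 by simp
    finally show ?thesis .
  qed
  have fin: "finite idx" by (simp add: idx_def)
  have "(\<Sum>i\<in>idx. \<Sum>j\<in>idx. (Av i * Bv j - Av j * Bv i)^2) = 0"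
    using lagr[of Av Bv] chi0 by simp
  then have mn: "Av i * Bv j = Av j * Bv i" if "i \<in> idx" "j \<in> idx" for i j
  proof -
    assume h: "(\<Sum>i\<in>idx. \<Sum>j\<in>idx. (Av i * Bv j - Av j * Bv i)^2) = 0"
    have "(\<Sum>j\<in>idx. (Av i * Bv j - Av j * Bv i)^2) = 0"
    proof -
      have nn: "\<And>i. 0 \<le> (\<Sum>j\<in>idx. (Av i * Bv j - Av j * Bv i)^2)" by (intro sum_nonneg) simp
      have "\<forall>i\<in>idx. (\<Sum>j\<in>idx. (Av i * Bv j - Av j * Bv i)^2) = 0"
        using sum_nonneg_eq_0_iff[OF fin, of "\<lambda>i. (\<Sum>j\<in>idx. (Av i * Bv j - Av j * Bv i)^2)"] h nn by blast
      then show ?thesis using that by blast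
    qed
    then have "(Av i * Bv j - Av j * Bv i)^2 = 0"
      using sum_nonneg_eq_0_iff[OF fin, of "\<lambda>j. (Av i * Bv j - Av j * Bv i)^2"] that by simp
    then show ?thesis by simp
  qed
  have q55: "(\<Sum>j\<in>idx. Q 5 j * Bv j) = 1" using QP i5 unfolding Bv_def by simp
  have q57: "(\<Sum>j\<in>idx. Q 5 j * Av j) = 0" using QP i5 i7 unfolding Av_def by simp
  have q77: "(\<Sum>j\<in>idx. Q 7 j * Av j) = 1" using QP i7 unfolding Av_def by simp
  have a0: "Av m = 0" if m: "m \<in> idx" for m
  proof -
    have "Av m = Av m * (\<Sum>j\<in>idx. Q 5 j * Bv j)" using q55 by simp
    also have "\<dots> = (\<Sum>j\<in>idx. Q 5 j * (Av m * Bv j))" by (simp add: sum_distrib_left algebra_simps)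
    also have "\<dots> = (\<Sum>j\<in>idx. Q 5 j * (Av j * Bv m))" using mn m by (intro sum.cong) auto
    also have "\<dots> = Bv m * (\<Sum>j\<in>idx. Q 5 j * Av j)" by (simp add: sum_distrib_left algebra_simps)
    also have "\<dots> = 0" using q57 by simp
    finally show ?thesis .
  qed
  have "(\<Sum>j\<in>idx. Q 7 j * Av j) = 0" using a0 by simp
  with q77 show False by simp
qed

theorem mainTheorem8:
  shows "(\<not> (\<exists>phi. alt3 phi \<and> closed3 phi \<and> is_G2 phi)) \<and>
    (\<forall>phi. alt3 phi \<and> closed3 phi \<longrightarrow>
       (\<forall>i\<in>idx. \<forall>j\<in>idx. i < j \<and> (i, j) \<notin> allowed_pairs \<longrightarrow> contr7 phi i j = 0) \<and>
       (\<forall>x. (\<forall>m<6. x m \<in> idx) \<longrightarrow> cube2 (contr7 phi) x = 0))"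
proof (intro conjI allI impI)
  show "\<not> (\<exists>phi. alt3 phi \<and> closed3 phi \<and> is_G2 phi)" using noG2 by blast
next
  fix phi assume h: "alt3 phi \<and> closed3 phi"
  then show "\<forall>i\<in>idx. \<forall>j\<in>idx. i < j \<and> (i, j) \<notin> allowed_pairs \<longrightarrow> contr7 phi i j = 0"
    using allv by blast
  fix x :: "nat \<Rightarrow> nat" assume "\<forall>m<6. x m \<in> idx"
  then show "cube2 (contr7 phi) x = 0" using cube_all W[of phi] h by blast
qed

end
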